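(* Let $M,N,K$ be positive integers, let $Y_0\in\mathbb{R}^{K\times N}$, and let $f_1,\dots,f_N\ge 0$ be real numbers. Let $A\in\{0,1\}^{M\times N}$ be a matrix each of whose columns contains exactly one entry equal to $1$ (all other entries $0$). For $i=1,\dots,M$ let $C_i=\{j\in\{1,\dots,N\}: A_{ij}=1\}$, and assume that $S_i:=\sum_{k\in C_i} f_k>0$ for every $i$ (in particular every $C_i$ is nonempty). Let $\mathcal{B}$ be the set of matrices $B\in\mathbb{R}^{N\times M}$ whose columns $v_1,\dots,v_M$ satisfy $v_i[j]=0$ for all $j\notin C_i$. Define, for $B\in\mathcal{B}$, $$\Phi(B)=\sum_{j=1}^{N} f_j\,\bigl\|Y_0\,(BA-I_N)\,e_j\bigr\|_2^2 ,$$ where $e_j$ is the $j$-th standard basis vector of $\mathbb{R}^N$. Then the matrix $B^*\in\mathcal{B}$ with columns $$v_i^*[j]=\begin{cases}\dfrac{f_j}{\sum_{k\in C_i} f_k}, & j\in C_i,\\[2mm] 0, & j\notin C_i,\end{cases}\qquad i=1,\dots,M,$$ is a global minimizer of $\Phi$ over $\mathcal{B}$, i.e. $\Phi(B^* )\le \Phi(B)$ for all $B\in\mathcal{B}$.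
   Context: In the paper's notation the objective is written $Y_0((BA-I_N)\mathrm{QF})\times[f_1,\dots,f_N]^\top$, where $Y_0(X)\,\mathrm{QF}$ denotes the vector whose $j$-th entry is $\|Y_0 x_j\|_2^2$ for $x_j$ the $j$-th column of $X$; this is exactly $\Phi(B)$ above. Interpretation (not needed for the claim): $N$ experts are merged into $M$ clusters, $A$ assigns each expert to a cluster, $f_j$ is the usage frequency of expert $j$, and $B$ holds the merging weights. *)

theory Defs
  imports "HOL-Analysis.Analysis"
begin

definition cluster :: "real^'n^'m \<Rightarrow> 'm \<Rightarrow> 'n set" where
  "cluster A i = {j. A $ i $ j = 1}"

definition admissible :: "real^'n^'m \<Rightarrow> real^'m^'n \<Rightarrow> bool" where
  "admissible A B \<longleftrightarrow> (\<forall>i j. j \<notin> cluster A i \<longrightarrow> B $ j $ i = 0)"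

definition Phi :: "real^'n^'k \<Rightarrow> (('n \<Rightarrow> real)) \<Rightarrow> real^'n^'m \<Rightarrow> real^'m^'n \<Rightarrow> real" where
  "Phi Y0 f A B = (\<Sum>j\<in>UNIV. f j * (norm (Y0 *v ((B ** A - mat 1) *v axis j 1)))\<^sup>2)"

definition Bstar :: "('n \<Rightarrow> real) \<Rightarrow> real^'n^'m \<Rightarrow> real^'m^'n" where
  "Bstar f A = (\<chi> j i. if j \<in> cluster A i then f j / (\<Sum>k\<in>cluster A i. f k) else 0)"

end

theory Submission
  imports Defs
begin

lemma sq_add: "(norm (a + b :: 'b::real_inner))\<^sup>2 = (norm a)\<^sup>2 + 2 * inner a b + (norm b)\<^sup>2"
  unfolding power2_norm_eq_inner by (simp add: inner_add_left inner_add_right inner_commute[of b a])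

lemma wmean:
  fixes y :: "'a \<Rightarrow> 'b::real_inner" and f :: "'a \<Rightarrow> real"
  assumes fin: "finite C" and S: "S = sum f C" "S \<noteq> 0"
    and m: "m = (1/S) *\<^sub>R (\<Sum>j\<in>C. f j *\<^sub>R y j)"
  shows "(\<Sum>j\<in>C. f j * (norm (x - y j))\<^sup>2) = S * (norm (x - m))\<^sup>2 + (\<Sum>j\<in>C. f j * (norm (m - y j))\<^sup>2)"
proof -
  have e: "(norm (x - y j))\<^sup>2 = (norm (x-m))\<^sup>2 + 2 * inner (x-m) (m - y j) + (norm (m - y j))\<^sup>2" for j
    using sq_add[of "x-m" "m - y j"] by simp
  have z: "(\<Sum>j\<in>C. f j *\<^sub>R (m - y j)) = 0"
  proof -
    have "(\<Sum>j\<in>C. f j *\<^sub>R (m - y j)) = S *\<^sub>R m - (\<Sum>j\<in>C. f j *\<^sub>R y j)"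
      by (simp add: S scaleR_diff_right sum_subtractf scaleR_left.sum)
    also have "\<dots> = 0" using S m by simp
    finally show ?thesis .
  qed
  have z2: "(\<Sum>j\<in>C. f j * inner (x-m) (m - y j)) = 0"
  proof -
    have "(\<Sum>j\<in>C. f j * inner (x-m) (m - y j)) = inner (x-m) (\<Sum>j\<in>C. f j *\<^sub>R (m - y j))"
      by (simp add: inner_sum_right)
    then show ?thesis using z by simp
  qed
  have "(\<Sum>j\<in>C. f j * (norm (x - y j))\<^sup>2) = (\<Sum>j\<in>C. f j * (norm (x-m))\<^sup>2 + 2 * (f j * inner (x-m) (m - y j)) + f j * (norm (m - y j))\<^sup>2)"
    by (simp add: e algebra_simps)
  also have "\<dots> = S * (norm (x-m))\<^sup>2 + 2 * (\<Sum>j\<in>C. f j * inner (x-m) (m - y j)) + (\<Sum>j\<in>C. f j * (norm (m - y j))\<^sup>2)"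
    by (simp add: sum.distrib sum_distrib_left sum_distrib_right S)
  finally show ?thesis using z2 by simp
qed

theorem theorem1:
  fixes Y0 :: "real^'n^'k" and A :: "real^'n^'m" and f :: "'n \<Rightarrow> real"
    and B :: "real^'m^'n"
  assumes f_nonneg: "\<And>j. f j \<ge> 0"
    and A_01: "\<And>i j. A $ i $ j = 0 \<or> A $ i $ j = 1"
    and A_col: "\<And>j. \<exists>!i. A $ i $ j = 1"
    and S_pos: "\<And>i. (\<Sum>k\<in>cluster A i. f k) > 0"
    and B_adm: "admissible A B"
  shows "admissible A (Bstar f A) \<and> Phi Y0 f A (Bstar f A) \<le> Phi Y0 f A B"
proof -
  define c where "c j = (THE i. A $ i $ j = 1)" for j
  have cA: "A $ c j $ j = 1" for j unfolding c_def by (rule theI'[OF A_col])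
  have cU: "i = c j" if "A $ i $ j = 1" for i j
    unfolding c_def by (rule the1_equality[OF A_col that, symmetric])
  have Aif: "A $ i $ j = (if i = c j then 1 else 0)" for i j
  proof (cases "i = c j")
    case True then show ?thesis using cA[of j] by simp
  next
    case False then have "A $ i $ j \<noteq> 1" using cU[of i j] by blast
    then show ?thesis using A_01[of i j] False by simp
  qed
  have cl: "cluster A i = {j. c j = i}" for i
  proof (rule set_eqI)
    fix j show "j \<in> cluster A i \<longleftrightarrow> j \<in> {j. c j = i}"
      unfolding cluster_def mem_Collect_eq using cA[of j] cU[of i j] by metis
  qed
  define y where "y j = Y0 *v axis j 1" for j
  define X where "X (M::real^'m^'n) i = Y0 *v (\<chi> l. M $ l $ i)" for M i
  have mat: "(M ** A - mat 1) *v axis j 1 = (\<chi> l. M $ l $ c j) - axis j 1" for M :: "real^'m^'n" and j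
  proof -
    have "(M ** A) $ l $ j = M $ l $ c j" for l
      by (simp add: matrix_matrix_mult_def Aif if_distrib cong: if_cong)
    then show ?thesis
      unfolding matrix_vector_mult_basis by (simp add: vec_eq_iff column_def mat_def axis_def)
  qed
  have PhiX: "Phi Y0 f A M = (\<Sum>i\<in>UNIV. \<Sum>j\<in>cluster A i. f j * (norm (X M i - y j))\<^sup>2)" for M :: "real^'m^'n"
  proof -
    have "Phi Y0 f A M = (\<Sum>j\<in>UNIV. f j * (norm (X M (c j) - y j))\<^sup>2)"
      unfolding Phi_def X_def y_def mat by (simp add: matrix_vector_mult_diff_distrib)
    also have "\<dots> = (\<Sum>i\<in>UNIV. \<Sum>j\<in>{x\<in>UNIV. c x = i}. f j * (norm (X M (c j) - y j))\<^sup>2)"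
      by (rule sum.group[symmetric]) auto
    also have "\<dots> = (\<Sum>i\<in>UNIV. \<Sum>j\<in>cluster A i. f j * (norm (X M i - y j))\<^sup>2)"
      unfolding cl by (intro sum.cong refl) auto
    finally show ?thesis .
  qed
  define S where "S i = (\<Sum>k\<in>cluster A i. f k)" for i
  define m where "m i = (1 / S i) *\<^sub>R (\<Sum>j\<in>cluster A i. f j *\<^sub>R y j)" for i
  have Xs: "X (Bstar f A) i = m i" for i
  proof -
    have "(X (Bstar f A) i) $ k = m i $ k" for k
    proof -
      have "(X (Bstar f A) i) $ k = (\<Sum>l\<in>UNIV. if l \<in> cluster A i then Y0 $ k $ l * (f l / S i) else 0)"
        unfolding X_def Bstar_def S_def by (simp add: matrix_vector_mult_def if_distrib cong: if_cong)
      also have "\<dots> = (\<Sum>l\<in>cluster A i. Y0 $ k $ l * (f l / S i))"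
        by (simp add: sum.If_cases)
      also have "\<dots> = m i $ k"
        unfolding m_def y_def by (simp add: sum_component matrix_vector_mult_basis column_def sum_divide_distrib algebra_simps)
      finally show ?thesis .
    qed
    then show ?thesis by (simp add: vec_eq_iff)
  qed
  have key: "(\<Sum>j\<in>cluster A i. f j * (norm (x - y j))\<^sup>2) = S i * (norm (x - m i))\<^sup>2 + (\<Sum>j\<in>cluster A i. f j * (norm (m i - y j))\<^sup>2)" for i x
    by (rule wmean) (use S_pos[of i] in \<open>auto simp: S_def m_def\<close>)
  have adm: "admissible A (Bstar f A)" unfolding admissible_def Bstar_def by simp
  have "Phi Y0 f A (Bstar f A) \<le> Phi Y0 f A B"
    unfolding PhiX Xs
  proof (rule sum_mono)
    fix i
    have "0 \<le> S i * (norm (X B i - m i))\<^sup>2" using S_pos[of i] by (simp add: S_def)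
    then show "(\<Sum>j\<in>cluster A i. f j * (norm (m i - y j))\<^sup>2) \<le> (\<Sum>j\<in>cluster A i. f j * (norm (X B i - y j))\<^sup>2)"
      using key[where i=i and x="X B i"] by linarith
  qed
  with adm show ?thesis by blast
qed

end
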